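(* Let $H\subset\mathbb{R}^n$ be a smooth bounded domain, $c\in L^\infty(H)$, and let $u\in C^2(H)\cap C(\overline H)$ satisfy $D_{H,\varphi}u+c(x)u\ge0$ in $H$, $u\ge0$ in $H$, and $u=\varphi$ on $\partial H$, where $\varphi\ge0$ on $\partial H$. Then either $u>0$ in $H$ or $u\equiv0$ in $H$.
   Context: For an open set $H\subset\mathbb{R}^n$, a function $\varphi$ on $\partial H$ and $u$ on $\overline H$ with $u=\varphi$ on $\partial H$, let $v$ be the bounded harmonic function in $\Omega=H\times(0,\infty)$, continuous up to the boundary, with $v(x,0)=u(x)$ for $x\in H$ and $v(x,\lambda)=\varphi(x)$ on $\partial H\times[0,\infty)$. Define $D_{H,\varphi}u(x):=-\partial_\lambda v(x,0)$ for $x\in H$. *)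

theory Defs
  imports "HOL-Analysis.Analysis"
begin

fun Ck :: "nat \<Rightarrow> ('a::euclidean_space \<Rightarrow> real) \<Rightarrow> 'a set \<Rightarrow> bool" where
  "Ck 0 f S = continuous_on S f"
| "Ck (Suc k) f S =
     ((\<forall>x\<in>S. f differentiable (at x)) \<and> continuous_on S f \<and>
      (\<forall>b\<in>Basis. Ck k (\<lambda>x. frechet_derivative f (at x) b) S))"

definition smooth_on :: "('a::euclidean_space \<Rightarrow> real) \<Rightarrow> 'a set \<Rightarrow> bool" where
  "smooth_on f S \<longleftrightarrow> (\<forall>k. Ck k f S)"

definition laplacian :: "('a::euclidean_space \<Rightarrow> real) \<Rightarrow> 'a \<Rightarrow> real" where
  "laplacian f x = (\<Sum>b\<in>Basis. frechet_derivative (\<lambda>y. frechet_derivative f (at y) b) (at x) b)"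

definition harmonic_on :: "('a::euclidean_space \<Rightarrow> real) \<Rightarrow> 'a set \<Rightarrow> bool" where
  "harmonic_on f S \<longleftrightarrow> open S \<and> Ck 2 f S \<and> (\<forall>x\<in>S. laplacian f x = 0)"

definition smooth_boundary :: "'a::euclidean_space set \<Rightarrow> bool" where
  "smooth_boundary H \<longleftrightarrow>
     (\<forall>p\<in>frontier H. \<exists>r>0. \<exists>\<rho>::'a \<Rightarrow> real.
        smooth_on \<rho> (ball p r) \<and>
        (\<forall>x\<in>ball p r. frechet_derivative \<rho> (at x) \<noteq> (\<lambda>_. 0)) \<and>
        H \<inter> ball p r = {x\<in>ball p r. \<rho> x < 0})"

definition smooth_bounded_domain :: "'a::euclidean_space set \<Rightarrow> bool" where
  "smooth_bounded_domain H \<longleftrightarrow>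
     open H \<and> connected H \<and> H \<noteq> {} \<and> bounded H \<and> smooth_boundary H"

definition Linfty_on :: "('a::euclidean_space \<Rightarrow> real) \<Rightarrow> 'a set \<Rightarrow> bool" where
  "Linfty_on c H \<longleftrightarrow> set_borel_measurable lebesgue H c \<and>
     (\<exists>M. AE x in lebesgue. x \<in> H \<longrightarrow> \<bar>c x\<bar> \<le> M)"

definition harmonic_ext ::
  "'a::euclidean_space set \<Rightarrow> ('a \<Rightarrow> real) \<Rightarrow> ('a \<Rightarrow> real) \<Rightarrow> ('a \<times> real \<Rightarrow> real) \<Rightarrow> bool" where
  "harmonic_ext H \<phi> u v \<longleftrightarrow>
     bounded (v ` (H \<times> {0<..})) \<and>
     continuous_on (closure (H \<times> {0<..})) v \<and>
     harmonic_on v (H \<times> {0<..}) \<and>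
     (\<forall>x\<in>H. v (x, 0) = u x) \<and>
     (\<forall>x\<in>frontier H. \<forall>t\<ge>0. v (x, t) = \<phi> x)"

text \<open>D_{H,\<phi>} u (x) = d  means  d = - \<partial>_\<lambda> v(x,0) (one-sided derivative at \<lambda> = 0)
  for the harmonic extension v.\<close>
definition is_D :: "'a::euclidean_space set \<Rightarrow> ('a \<Rightarrow> real) \<Rightarrow> ('a \<Rightarrow> real) \<Rightarrow> ('a \<times> real \<Rightarrow> real) \<Rightarrow> 'a \<Rightarrow> real \<Rightarrow> bool" where
  "is_D H \<phi> u v x d \<longleftrightarrow> ((\<lambda>t. v (x, t)) has_real_derivative (- d)) (at 0 within {0..})"

end

theory Submission
  imports Defs
begin


lemma second_deriv_min:
  fixes \<phi> \<phi>' :: "real \<Rightarrow> real"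
  assumes d: "\<delta> > 0"
    and der: "\<And>s. \<bar>s\<bar> < \<delta> \<Longrightarrow> (\<phi> has_real_derivative \<phi>' s) (at s)"
    and der2: "(\<phi>' has_real_derivative D) (at 0)"
    and mn: "\<And>s. \<bar>s\<bar> < \<delta> \<Longrightarrow> \<phi> 0 \<le> \<phi> s"
  shows "D \<ge> 0"
proof (rule ccontr)
  assume "\<not> D \<ge> 0"
  hence Dn: "D < 0" by simp
  have z: "\<phi>' 0 = 0"
    using DERIV_local_min[OF der[of 0] d] mn d by auto
  have "((\<lambda>y. (\<phi>' y - \<phi>' 0) / (y - 0)) \<longlongrightarrow> D) (at 0)"
    using der2 has_field_derivative_iff by blast
  hence "((\<lambda>y. \<phi>' y / y) \<longlongrightarrow> D) (at 0)" using z by simp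
  hence "eventually (\<lambda>y. \<phi>' y / y < 0) (at 0)"
    using Dn order_tendstoD(2) by blast
  then obtain e where e: "e > 0" "\<And>y. y \<noteq> 0 \<Longrightarrow> dist y 0 < e \<Longrightarrow> \<phi>' y / y < 0"
    unfolding eventually_at by blast
  define \<eta> where "\<eta> = min e \<delta> / 2"
  have eta: "\<eta> > 0" "\<eta> < e" "\<eta> < \<delta>" using e d by (auto simp: \<eta>_def)
  have "\<exists>z. 0 < z \<and> z < \<eta> \<and> \<phi> \<eta> - \<phi> 0 = (\<eta> - 0) * \<phi>' z"
    apply (rule MVT2[OF eta(1)])
    apply (rule der) using eta by auto
  then obtain z where zz: "0 < z" "z < \<eta>" "\<phi> \<eta> - \<phi> 0 = \<eta> * \<phi>' z" by auto
  have "\<phi>' z / z < 0" using e(2)[of z] zz eta by auto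
  hence "\<phi>' z < 0" using zz by (simp add: divide_less_0_iff)
  hence "\<eta> * \<phi>' z < 0" using eta(1) by (simp add: mult_pos_neg)
  hence "\<phi> \<eta> < \<phi> 0" using zz by linarith
  moreover have "\<phi> 0 \<le> \<phi> \<eta>" using mn[of \<eta>] eta by auto
  ultimately show False by simp
qed

lemma deriv_ge:
  fixes \<psi> h :: "real \<Rightarrow> real"
  assumes d1: "(\<psi> has_real_derivative D) (at 0 within {0..})"
    and d2: "(h has_real_derivative E) (at 0)"
    and eta: "\<eta> > 0" and le: "\<And>s. 0 \<le> s \<Longrightarrow> s \<le> \<eta> \<Longrightarrow> h s \<le> \<psi> s"
    and eq: "h 0 = \<psi> 0"
  shows "E \<le> D"
proof -
  have l1: "((\<lambda>y. (\<psi> y - \<psi> 0) / (y - 0)) \<longlongrightarrow> D) (at_right 0)"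
    using d1 has_field_derivative_iff at_within_Ici_at_right by metis
  have "(h has_real_derivative E) (at 0 within {0..})"
    using d2 has_field_derivative_at_within by blast
  hence l2: "((\<lambda>y. (h y - h 0) / (y - 0)) \<longlongrightarrow> E) (at_right 0)"
    using has_field_derivative_iff at_within_Ici_at_right by metis
  have ev: "eventually (\<lambda>y. (h y - h 0) / (y - 0) \<le> (\<psi> y - \<psi> 0) / (y - 0)) (at_right 0)"
    unfolding eventually_at_right_field
  proof -
    have "\<forall>y>0. y < \<eta> \<longrightarrow> (h y - h 0) / (y - 0) \<le> (\<psi> y - \<psi> 0) / (y - 0)"
      using le eq by (auto simp: divide_right_mono)
    thus "\<exists>b>0. \<forall>y>0. y < b \<longrightarrow> (h y - h 0) / (y - 0) \<le> (\<psi> y - \<psi> 0) / (y - 0)"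
      using eta by blast
  qed
  show ?thesis
    by (rule tendsto_le[OF trivial_limit_at_right_real l1 l2 ev])
qed

lemma dir_deriv:
  fixes f :: "'b::euclidean_space \<Rightarrow> real"
  assumes "f differentiable (at (z + s0 *\<^sub>R b))"
  shows "((\<lambda>s. f (z + s *\<^sub>R b)) has_real_derivative frechet_derivative f (at (z + s0 *\<^sub>R b)) b) (at s0)"
proof -
  let ?p = "z + s0 *\<^sub>R b"
  let ?L = "frechet_derivative f (at ?p)"
  have fd: "(f has_derivative ?L) (at ?p)"
    using assms frechet_derivative_works by blast
  have bl: "bounded_linear ?L" using fd has_derivative_bounded_linear by blast
  have g: "((\<lambda>s. z + s *\<^sub>R b) has_derivative (\<lambda>h. h *\<^sub>R b)) (at s0)"
    by (auto intro!: derivative_eq_intros)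
  have "((f \<circ> (\<lambda>s. z + s *\<^sub>R b)) has_derivative (?L \<circ> (\<lambda>h. h *\<^sub>R b))) (at s0)"
    by (rule diff_chain_at[OF g]) (use fd in simp)
  moreover have "(?L \<circ> (\<lambda>h. h *\<^sub>R b)) = (\<lambda>h. ?L b * h)"
  proof
    fix h :: real
    have "?L (h *\<^sub>R b) = h *\<^sub>R ?L b" using bl by (simp add: linear_simps(5))
    thus "(?L \<circ> (\<lambda>h. h *\<^sub>R b)) h = ?L b * h" by simp
  qed
  ultimately show ?thesis
    by (simp add: has_field_derivative_def comp_def)
qed

lemma lap_min:
  fixes v G :: "'b::euclidean_space \<Rightarrow> real"
  assumes S: "open S" and C2: "Ck 2 v S" and zS: "z \<in> S" and d: "\<delta> > 0"
    and mn: "\<And>y. y \<in> ball z \<delta> \<Longrightarrow> v z + G z \<le> v y + G y"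
    and G1: "\<And>b s. b \<in> Basis \<Longrightarrow> ((\<lambda>s. G (z + s *\<^sub>R b)) has_real_derivative DGa b s) (at s)"
    and G2: "\<And>b. b \<in> Basis \<Longrightarrow> (DGa b has_real_derivative DGb b) (at 0)"
  shows "laplacian v z + (\<Sum>b\<in>Basis. DGb b) \<ge> 0"
proof -
  obtain e where e: "e > 0" "ball z e \<subseteq> S" using S zS open_contains_ball by blast
  define d' where "d' = min e \<delta>"
  have d': "d' > 0" "ball z d' \<subseteq> S" "ball z d' \<subseteq> ball z \<delta>" using e d by (auto simp: d'_def)
  have diff: "\<And>x. x \<in> S \<Longrightarrow> v differentiable (at x)" using C2
    by (simp add: numeral_2_eq_2)
  have diff2: "\<And>b x. b \<in> Basis \<Longrightarrow> x \<in> S \<Longrightarrow> (\<lambda>y. frechet_derivative v (at y) b) differentiable (at x)"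
    using C2 by (simp add: numeral_2_eq_2)
  have each: "frechet_derivative (\<lambda>y. frechet_derivative v (at y) b) (at z) b + DGb b \<ge> 0"
    if b: "b \<in> Basis" for b
  proof -
    have nb: "norm b = 1" using b by simp
    have inball: "z + s *\<^sub>R b \<in> ball z d'" if "\<bar>s\<bar> < d'" for s
      using that nb by (simp add: dist_norm)
    show ?thesis
    proof (rule second_deriv_min[OF d'(1), where \<phi> = "\<lambda>s. v (z + s *\<^sub>R b) + G (z + s *\<^sub>R b)"
          and \<phi>' = "\<lambda>s. frechet_derivative v (at (z + s *\<^sub>R b)) b + DGa b s"])
      fix s :: real assume s: "\<bar>s\<bar> < d'"
      have "z + s *\<^sub>R b \<in> S" using inball[OF s] d'(2) by blast
      thus "((\<lambda>s. v (z + s *\<^sub>R b) + G (z + s *\<^sub>R b)) has_real_derivative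
            frechet_derivative v (at (z + s *\<^sub>R b)) b + DGa b s) (at s)"
        by (intro DERIV_add dir_deriv diff G1 b)
    next
      have "((\<lambda>s. frechet_derivative v (at (z + s *\<^sub>R b)) b) has_real_derivative
            frechet_derivative (\<lambda>y. frechet_derivative v (at y) b) (at (z + 0 *\<^sub>R b)) b) (at 0)"
        by (rule dir_deriv[where f = "\<lambda>y. frechet_derivative v (at y) b"]) (use diff2 b zS in simp)
      thus "((\<lambda>s. frechet_derivative v (at (z + s *\<^sub>R b)) b + DGa b s) has_real_derivative
            frechet_derivative (\<lambda>y. frechet_derivative v (at y) b) (at z) b + DGb b) (at 0)"
        by (intro DERIV_add G2 b) simp
    next
      fix s :: real assume s: "\<bar>s\<bar> < d'"
      show "v (z + 0 *\<^sub>R b) + G (z + 0 *\<^sub>R b) \<le> v (z + s *\<^sub>R b) + G (z + s *\<^sub>R b)"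
        using mn[of "z + s *\<^sub>R b"] inball[OF s] d'(3) by auto
    qed
  qed
  have "0 \<le> (\<Sum>b\<in>Basis. frechet_derivative (\<lambda>y. frechet_derivative v (at y) b) (at z) b + DGb b)"
    using each by (simp add: sum_nonneg)
  thus ?thesis by (simp add: laplacian_def sum.distrib)
qed


lemma sum_inner_sq:
  fixes x :: "'b::euclidean_space"
  shows "(\<Sum>b\<in>Basis. (x \<bullet> b)^2) = x \<bullet> x"
  by (simp add: euclidean_inner[of x x] power2_eq_square)

lemma hopf:
  fixes v :: "'b::euclidean_space \<Rightarrow> real"
  assumes S: "open S" and C2: "Ck 2 v S" and lap: "\<And>z. z \<in> S \<Longrightarrow> laplacian v z = 0"
    and r: "r > 0"
    and ann: "\<And>z. r/2 < dist y z \<Longrightarrow> dist y z < r \<Longrightarrow> z \<in> S"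
    and cont: "continuous_on (cball y r) v"
    and nonneg: "\<And>z. z \<in> cball y r \<Longrightarrow> v z \<ge> 0"
    and pos: "\<And>z. z \<in> ball y r \<Longrightarrow> v z > 0"
    and z0: "dist y z0 = r" "v z0 = 0"
    and D: "((\<lambda>s. v (z0 + s *\<^sub>R ((y - z0) /\<^sub>R r))) has_real_derivative D) (at 0 within {0..})"
  shows "D > 0"
proof -
  define N where "N = real DIM('b)"
  have N: "N \<ge> 1" unfolding N_def using DIM_positive[where 'a='b] by linarith
  define \<alpha> where "\<alpha> = 2 * N / r^2 + 1"
  have \<alpha>: "\<alpha> > 0" "\<alpha> * r^2 > 2 * N" using r N by (auto simp: \<alpha>_def field_simps add_pos_nonneg)
  define c where "c = exp (- \<alpha> * r^2)"
  have c: "c > 0" by (simp add: c_def)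
  define g where "g z = exp (- \<alpha> * ((z - y) \<bullet> (z - y))) - c" for z
  have g_le: "g z \<le> 1" for z
  proof -
    have "- \<alpha> * ((z - y) \<bullet> (z - y)) \<le> 0" using \<alpha> by simp
    hence "exp (- \<alpha> * ((z - y) \<bullet> (z - y))) \<le> 1" by (simp del: mult_minus_left)
    thus ?thesis using c unfolding g_def by linarith
  qed
  have inner_dist: "(z - y) \<bullet> (z - y) = (dist y z)^2" for z
    by (simp add: dot_square_norm dist_norm norm_minus_commute)
  obtain b0 :: 'b where b0: "b0 \<in> Basis" using nonempty_Basis by blast
  have sne: "sphere y (r/2) \<noteq> {}"
  proof -
    have "y + (r/2) *\<^sub>R b0 \<in> sphere y (r/2)" using b0 r by (simp add: dist_norm)
    thus ?thesis by blast
  qed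
  have ssub: "sphere y (r/2) \<subseteq> ball y r" using r by auto
  obtain zm where zm: "zm \<in> sphere y (r/2)" "\<And>z. z \<in> sphere y (r/2) \<Longrightarrow> v zm \<le> v z"
    using continuous_attains_inf[OF compact_sphere sne, of v]
      continuous_on_subset[OF cont] ssub ball_subset_cball by blast
  define m where "m = v zm"
  have m: "m > 0" using pos zm(1) ssub by (auto simp: m_def)
  define A where "A = cball y r - ball y (r/2)"
  have W: "v z - m * g z \<ge> 0" if zA: "z \<in> A" for z
  proof (rule ccontr)
    assume neg: "\<not> v z - m * g z \<ge> 0"
    have cA: "compact A" unfolding A_def by (intro compact_diff) auto
    have ctA: "continuous_on A (\<lambda>z. v z - m * g z)"
      unfolding g_def A_def
      by (intro continuous_intros continuous_on_subset[OF cont]) auto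
    obtain zs where zs: "zs \<in> A" "\<And>z. z \<in> A \<Longrightarrow> v zs - m * g zs \<le> v z - m * g z"
      using continuous_attains_inf[OF cA _ ctA] zA by blast
    have wneg: "v zs - m * g zs < 0" using zs(2)[OF zA] neg by linarith
    have dz: "r/2 \<le> dist y zs" "dist y zs \<le> r" using zs(1) by (auto simp: A_def)
    consider "dist y zs = r" | "dist y zs = r/2" | "r/2 < dist y zs" "dist y zs < r"
      using dz by linarith
    thus False
    proof cases
      case 1
      hence "g zs = 0" by (simp add: g_def inner_dist c_def)
      moreover have "v zs \<ge> 0" using nonneg zs(1) by (auto simp: A_def)
      ultimately show False using wneg by simp
    next
      case 2
      hence "v zs \<ge> m" using zm(2)[of zs] by (simp add: m_def)
      moreover have "m * g zs \<le> m" using g_le[of zs] m by (simp add: mult_left_le)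
      ultimately show False using wneg by linarith
    next
      case 3
      define \<delta> where "\<delta> = min (dist y zs - r/2) (r - dist y zs)"
      have \<delta>: "\<delta> > 0" using 3 by (simp add: \<delta>_def)
      have ballA: "p \<in> A" if "p \<in> ball zs \<delta>" for p
      proof -
        have "dist zs p < \<delta>" using that by simp
        moreover have "dist y p \<le> dist y zs + dist zs p" "dist y zs \<le> dist y p + dist zs p"
          using dist_triangle[of y p zs] dist_triangle[of y zs p] by (auto simp: dist_commute)
        ultimately show ?thesis unfolding A_def \<delta>_def by auto
      qed
      have zsS: "zs \<in> S" using ann 3 by blast
      define \<rho> where "\<rho> = (zs - y) \<bullet> (zs - y)"
      have \<rho>: "\<rho> > r^2 / 4"
      proof -
        have "(r/2)^2 < (dist y zs)^2" using 3 r by (intro power_strict_mono) auto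
        thus ?thesis by (simp add: \<rho>_def inner_dist power_divide)
      qed
      define G1 where "G1 b s = m * \<alpha> * (2 * ((zs - y) \<bullet> b) + 2 * s) *
          exp (- \<alpha> * (\<rho> + 2 * s * ((zs - y) \<bullet> b) + s^2))" for b s
      define G2 where "G2 b = m * \<alpha> * exp (- \<alpha> * \<rho>) * (2 - 4 * \<alpha> * ((zs - y) \<bullet> b)^2)" for b :: 'b
      have Geq: "(\<lambda>s. - m * g (zs + s *\<^sub>R b)) =
          (\<lambda>s. - m * (exp (- \<alpha> * (\<rho> + 2 * s * ((zs - y) \<bullet> b) + s^2)) - c))"
        if b: "b \<in> Basis" for b
      proof
        fix s :: real
        have "(zs + s *\<^sub>R b - y) \<bullet> (zs + s *\<^sub>R b - y) = \<rho> + 2 * s * ((zs - y) \<bullet> b) + s^2"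
        proof -
          have e: "zs + s *\<^sub>R b - y = (zs - y) + s *\<^sub>R b" by (simp add: algebra_simps)
          show ?thesis using b unfolding e \<rho>_def
            by (simp add: inner_add_left inner_add_right inner_commute power2_eq_square algebra_simps)
        qed
        thus "- m * g (zs + s *\<^sub>R b) = - m * (exp (- \<alpha> * (\<rho> + 2 * s * ((zs - y) \<bullet> b) + s^2)) - c)"
          by (simp add: g_def)
      qed
      have lm: "laplacian v zs + (\<Sum>b\<in>Basis. G2 b) \<ge> 0"
      proof (rule lap_min[OF S C2 zsS \<delta>, where G = "\<lambda>z. - m * g z" and DGa = G1 and DGb = G2])
        fix p assume "p \<in> ball zs \<delta>"
        hence "p \<in> A" by (rule ballA)
        thus "v zs + - m * g zs \<le> v p + - m * g p" using zs(2) by fastforce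
      next
        fix b :: 'b and s :: real assume b: "b \<in> Basis"
        show "((\<lambda>s. - m * g (zs + s *\<^sub>R b)) has_real_derivative G1 b s) (at s)"
          unfolding Geq[OF b] G1_def
          by (auto intro!: derivative_eq_intros simp: algebra_simps)
      next
        fix b :: 'b assume b: "b \<in> Basis"
        show "(G1 b has_real_derivative G2 b) (at 0)"
          unfolding G1_def[abs_def] G2_def
          by (auto intro!: derivative_eq_intros simp: algebra_simps power2_eq_square)
      qed
      have "(\<Sum>b\<in>Basis. G2 b) = m * \<alpha> * exp (- \<alpha> * \<rho>) * (2 * N - 4 * \<alpha> * \<rho>)"
      proof -
        have "(\<Sum>b\<in>Basis. G2 b) = m * \<alpha> * exp (- \<alpha> * \<rho>) *
            (\<Sum>b\<in>Basis. (2 - 4 * \<alpha> * ((zs - y) \<bullet> b)^2))"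
          unfolding G2_def by (simp add: sum_distrib_left)
        also have "(\<Sum>b\<in>Basis. (2 - 4 * \<alpha> * ((zs - y) \<bullet> b)^2)) = 2 * N - 4 * \<alpha> * \<rho>"
          by (simp add: sum_subtractf sum_distrib_left[symmetric] sum_inner_sq N_def \<rho>_def)
        finally show ?thesis .
      qed
      moreover have "2 * N - 4 * \<alpha> * \<rho> < 0"
      proof -
        have "4 * \<alpha> * \<rho> > 4 * \<alpha> * (r^2/4)" using \<rho> \<alpha> by simp
        moreover have "4 * \<alpha> * (r^2/4) = \<alpha> * r^2" by simp
        ultimately show ?thesis using \<alpha> by linarith
      qed
      moreover have "m * \<alpha> * exp (- \<alpha> * \<rho>) > 0" using m \<alpha> by simp
      ultimately have "(\<Sum>b\<in>Basis. G2 b) < 0" by (simp add: mult_pos_neg)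
      thus False using lm lap[OF zsS] by simp
    qed
  qed
  define h where "h s = m * (exp (- \<alpha> * (r - s)^2) - c)" for s
  have hle: "h s \<le> v (z0 + s *\<^sub>R ((y - z0) /\<^sub>R r))" if s: "0 \<le> s" "s \<le> r/2" for s
  proof -
    let ?p = "z0 + s *\<^sub>R ((y - z0) /\<^sub>R r)"
    have e: "?p - y = (1 - s / r) *\<^sub>R (z0 - y)" using r by (simp add: algebra_simps divide_inverse)
    have n: "norm (z0 - y) = r" using z0(1) by (simp add: dist_norm norm_minus_commute)
    have "dist y ?p = norm (?p - y)" by (simp add: dist_norm norm_minus_commute)
    also have "\<dots> = norm ((1 - s / r) *\<^sub>R (z0 - y))" by (simp only: e)
    also have "\<dots> = (1 - s/r) * r" using s r n by (simp add: abs_of_nonneg)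
    also have "\<dots> = r - s" using r by (simp add: field_simps)
    finally have dp: "dist y ?p = r - s" .
    have "?p \<in> A" unfolding A_def using dp s by auto
    hence "v ?p \<ge> m * g ?p" using W by fastforce
    moreover have "g ?p = exp (- \<alpha> * (r - s)^2) - c" unfolding g_def inner_dist dp ..
    ultimately show ?thesis by (simp add: h_def)
  qed
  have hd: "(h has_real_derivative (m * c * (2 * \<alpha> * r))) (at 0)"
    unfolding h_def[abs_def] c_def
    by (auto intro!: derivative_eq_intros simp: algebra_simps power2_eq_square)
  have h0: "h 0 = v (z0 + 0 *\<^sub>R ((y - z0) /\<^sub>R r))" using z0 by (simp add: h_def c_def)
  have "m * c * (2 * \<alpha> * r) \<le> D"
    by (rule deriv_ge[OF D hd, of "r/2"]) (use r hle h0 in auto)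
  moreover have "m * c * (2 * \<alpha> * r) > 0" using m c \<alpha> r by simp
  ultimately show ?thesis by linarith
qed

lemma ext_nonneg:
  fixes H :: "'a::euclidean_space set" and v :: "'a \<times> real \<Rightarrow> real"
  assumes oH: "open H" and bH: "bounded H"
    and hv: "harmonic_ext H \<phi> u v"
    and phi: "\<forall>x\<in>frontier H. \<phi> x \<ge> 0" and unn: "\<forall>x\<in>H. u x \<ge> 0"
    and z0: "z0 \<in> H \<times> {0<..}"
  shows "v z0 \<ge> 0"
proof (rule ccontr)
  assume "\<not> v z0 \<ge> 0"
  hence vz0: "v z0 < 0" by simp
  define \<Omega> where "\<Omega> = H \<times> ({0<..} :: real set)"
  have bnd: "bounded (v ` \<Omega>)" and cont: "continuous_on (closure \<Omega>) v"
    and harm: "harmonic_on v \<Omega>" and bot: "\<forall>x\<in>H. v (x, 0) = u x"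
    and side: "\<forall>x\<in>frontier H. \<forall>t\<ge>0. v (x, t) = \<phi> x"
    using hv by (auto simp: harmonic_ext_def \<Omega>_def)
  have clO: "closure \<Omega> = closure H \<times> {0..}" by (simp add: \<Omega>_def closure_Times)
  have oO: "open \<Omega>" and C2: "Ck 2 v \<Omega>" and lap: "\<And>z. z \<in> \<Omega> \<Longrightarrow> laplacian v z = 0"
    using harm by (auto simp: harmonic_on_def)
  obtain M where M: "\<And>z. z \<in> \<Omega> \<Longrightarrow> \<bar>v z\<bar> \<le> M"
    using bnd unfolding bounded_iff by auto
  obtain B where B: "\<And>x. x \<in> closure H \<Longrightarrow> norm x \<le> B"
    using bounded_closure[OF bH] unfolding bounded_iff by auto
  define K where "K = B^2 + 1"
  define G where "G z = snd z + K - fst z \<bullet> fst z" for z :: "'a \<times> real"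
  have Gpos: "G z \<ge> snd z + 1" if "fst z \<in> closure H" for z
  proof -
    have "norm (fst z) \<le> B" using B that by blast
    hence "(norm (fst z))^2 \<le> B^2" by (simp add: power_mono)
    thus ?thesis by (simp add: G_def K_def dot_square_norm)
  qed
  obtain x0 t0 where zz: "z0 = (x0, t0)" "x0 \<in> H" "t0 > 0" using z0 by auto
  have Gz0: "G z0 \<ge> t0 + 1" using Gpos[of z0] zz closure_subset by auto
  define \<epsilon> where "\<epsilon> = - v z0 / (2 * G z0)"
  have "G z0 > 0" using Gz0 zz by linarith
  hence \<epsilon>: "\<epsilon> > 0" using vz0 unfolding \<epsilon>_def by (intro divide_pos_pos) auto
  define w where "w z = v z + \<epsilon> * G z" for z
  have wz0: "w z0 < 0"
  proof -
    have "\<epsilon> * G z0 = - v z0 / 2" using Gz0 zz by (simp add: \<epsilon>_def)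
    thus ?thesis using vz0 by (simp add: w_def)
  qed
  define T where "T = t0 + M / \<epsilon> + 1"
  have M0: "M \<ge> 0" using M[of z0] z0 by (auto simp: \<Omega>_def)
  have "M / \<epsilon> \<ge> 0" using M0 \<epsilon> by simp
  hence T: "T > t0" by (simp add: T_def)
  define C where "C = closure H \<times> {0..T}"
  have cC: "compact C" unfolding C_def using bH by (intro compact_Times compact_closure[THEN iffD2]) auto
  have Ccl: "C \<subseteq> closure \<Omega>" unfolding C_def clO by auto
  have ctC: "continuous_on C w" unfolding w_def G_def
    by (intro continuous_intros continuous_on_subset[OF cont Ccl])
  have z0C: "z0 \<in> C" using zz T closure_subset by (auto simp: C_def)
  obtain zs where zs: "zs \<in> C" "\<And>z. z \<in> C \<Longrightarrow> w zs \<le> w z"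
    using continuous_attains_inf[OF cC _ ctC] z0C by blast
  have wneg: "w zs < 0" using zs(2)[OF z0C] wz0 by simp
  obtain xs ts where zsp: "zs = (xs, ts)" by (cases zs)
  have xs: "xs \<in> closure H" and ts: "0 \<le> ts" "ts \<le> T" using zs(1) by (auto simp: C_def zsp)
  have Gs: "G zs > 0" using Gpos[of zs] xs ts by (simp add: zsp)
  have eG: "\<epsilon> * G zs > 0" using Gs \<epsilon> by simp
  show False
  proof (cases "xs \<in> H")
    case False
    hence "xs \<in> frontier H" using xs oH by (simp add: frontier_def interior_open)
    hence "v zs \<ge> 0" using side phi ts by (auto simp: zsp)
    thus False using wneg eG unfolding w_def by linarith
  next
    case xH: True
    consider "ts = 0" | "ts = T" | "0 < ts" "ts < T" using ts by linarith
    thus False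
    proof cases
      case 1
      hence "v zs \<ge> 0" using bot unn xH by (simp add: zsp)
      thus False using wneg eG unfolding w_def by linarith
    next
      case 2
      have "zs \<in> \<Omega>" using 2 T zz xH by (simp add: zsp \<Omega>_def)
      hence "v zs \<ge> - M" using M by fastforce
      moreover have "G zs \<ge> T + 1" using Gpos[of zs] xs 2 by (simp add: zsp)
      hence "\<epsilon> * G zs \<ge> \<epsilon> * (T + 1)" using \<epsilon> by (simp add: mult_left_mono)
      moreover have "\<epsilon> * (T + 1) > M"
      proof -
        have "\<epsilon> * (T + 1) = \<epsilon> * t0 + M + 2 * \<epsilon>" using \<epsilon> by (simp add: T_def field_simps)
        thus ?thesis using \<epsilon> zz by (simp add: add_pos_pos)
      qed
      ultimately show False using wneg by (simp add: w_def)
    next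
      case 3
      obtain d1 where d1: "d1 > 0" "ball xs d1 \<subseteq> H" using oH xH open_contains_ball by blast
      define \<delta> where "\<delta> = min d1 (min ts (T - ts))"
      have \<delta>: "\<delta> > 0" using d1 3 by (simp add: \<delta>_def)
      have zsO: "zs \<in> \<Omega>" using xH 3 by (simp add: zsp \<Omega>_def)
      have bC: "p \<in> C" if "p \<in> ball zs \<delta>" for p
      proof -
        have "dist (fst zs) (fst p) < \<delta>" "dist (snd zs) (snd p) < \<delta>"
          using that dist_fst_le[of zs p] dist_snd_le[of zs p] by auto
        hence "fst p \<in> H" "0 \<le> snd p" "snd p \<le> T"
          using d1 by (auto simp: \<delta>_def zsp dist_real_def)
        thus ?thesis using closure_subset by (cases p) (auto simp: C_def)
      qed
      define DGa where "DGa b s = \<epsilon> * (snd b - 2 * (xs \<bullet> fst b) - 2 * s * (fst b \<bullet> fst b))"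
        for b :: "'a \<times> real" and s :: real
      define DGb where "DGb b = - 2 * \<epsilon> * (fst b \<bullet> fst b)" for b :: "'a \<times> real"
      have lm: "laplacian v zs + (\<Sum>b\<in>Basis. DGb b) \<ge> 0"
      proof (rule lap_min[OF oO C2 zsO \<delta>, where G = "\<lambda>z. \<epsilon> * G z" and DGa = DGa and DGb = DGb])
        fix p assume "p \<in> ball zs \<delta>"
        hence "w zs \<le> w p" using zs(2) bC by blast
        thus "v zs + \<epsilon> * G zs \<le> v p + \<epsilon> * G p" by (simp add: w_def)
      next
        fix b :: "'a \<times> real" and s :: real
        have eq: "(\<lambda>s. \<epsilon> * G (zs + s *\<^sub>R b)) = (\<lambda>s. \<epsilon> * (ts + s * snd b + K -
            (xs \<bullet> xs + 2 * s * (xs \<bullet> fst b) + s^2 * (fst b \<bullet> fst b))))"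
          by (auto simp: fun_eq_iff G_def zsp inner_add_left inner_add_right inner_commute
              power2_eq_square algebra_simps)
        show "((\<lambda>s. \<epsilon> * G (zs + s *\<^sub>R b)) has_real_derivative DGa b s) (at s)"
          unfolding eq DGa_def by (auto intro!: derivative_eq_intros simp: algebra_simps)
      next
        fix b :: "'a \<times> real"
        show "(DGa b has_real_derivative DGb b) (at 0)"
          unfolding DGa_def[abs_def] DGb_def by (auto intro!: derivative_eq_intros simp: algebra_simps)
      qed
      obtain u0 :: 'a where u0: "u0 \<in> Basis" using nonempty_Basis by blast
      have b0: "(u0, 0) \<in> (Basis :: ('a \<times> real) set)" using u0 by (auto simp: Basis_prod_def)
      have "(\<lambda>b::'a \<times> real. fst b \<bullet> fst b) (u0, 0) \<le> (\<Sum>b\<in>(Basis :: ('a \<times> real) set). fst b \<bullet> fst b)"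
        using member_le_sum[OF b0, of "\<lambda>b. fst b \<bullet> fst b"] by auto
      hence "(\<Sum>b\<in>(Basis :: ('a \<times> real) set). fst b \<bullet> fst b) \<ge> 1" using u0 by simp
      moreover have "(\<Sum>b\<in>Basis. DGb b) = - 2 * \<epsilon> * (\<Sum>b\<in>(Basis :: ('a \<times> real) set). fst b \<bullet> fst b)"
        unfolding DGb_def by (simp add: sum_distrib_left)
      ultimately have "(\<Sum>b\<in>Basis. DGb b) < 0" using \<epsilon>
        by (simp add: mult_pos_pos)
      thus False using lm lap[OF zsO] by simp
    qed
  qed
qed

theorem mainTheorem9:
  fixes H :: "'a::euclidean_space set"
    and c u \<phi> :: "'a \<Rightarrow> real"
  assumes "smooth_bounded_domain H"
    and "Linfty_on c H"
    and "Ck 2 u H" and "continuous_on (closure H) u"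
    and "\<forall>x\<in>frontier H. \<phi> x \<ge> 0"
    and "\<forall>x\<in>frontier H. u x = \<phi> x"
    and "\<forall>x\<in>H. u x \<ge> 0"
    and "\<exists>v. harmonic_ext H \<phi> u v \<and>
           (\<forall>x\<in>H. \<exists>d. is_D H \<phi> u v x d \<and> d + c x * u x \<ge> 0)"
  shows "(\<forall>x\<in>H. u x > 0) \<or> (\<forall>x\<in>H. u x = 0)"
proof -
  note dom = assms(1) and phi = assms(5) and unn = assms(7)
  obtain v where hv: "harmonic_ext H \<phi> u v"
    and hD: "\<forall>x\<in>H. \<exists>d. is_D H \<phi> u v x d \<and> d + c x * u x \<ge> 0"
    using assms(8) by blast
  have oH: "open H" and cH: "connected H" and bH: "bounded H"
    using dom by (auto simp: smooth_bounded_domain_def)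
  define \<Omega> where "\<Omega> = H \<times> ({0<..} :: real set)"
  have cont: "continuous_on (closure \<Omega>) v"
    and harm: "harmonic_on v \<Omega>" and bot: "\<forall>x\<in>H. v (x, 0) = u x"
    using hv by (auto simp: harmonic_ext_def \<Omega>_def)
  have clO: "closure \<Omega> = closure H \<times> {0..}" by (simp add: \<Omega>_def closure_Times)
  have oO: "open \<Omega>" and C2: "Ck 2 v \<Omega>" and lap: "\<And>z. z \<in> \<Omega> \<Longrightarrow> laplacian v z = 0"
    using harm by (auto simp: harmonic_on_def)
  have contO: "continuous_on \<Omega> v" using continuous_on_subset[OF cont closure_subset] .
  have vnn: "\<And>z. z \<in> \<Omega> \<Longrightarrow> v z \<ge> 0"
    using ext_nonneg[OF oH bH hv phi unn] by (auto simp: \<Omega>_def)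
  have vnn_cl: "\<And>z. z \<in> closure \<Omega> \<Longrightarrow> v z \<ge> 0"
  proof -
    have "v ` closure \<Omega> \<subseteq> {0..}"
      by (rule image_closure_subset[OF cont]) (use vnn in auto)
    thus "\<And>z. z \<in> closure \<Omega> \<Longrightarrow> v z \<ge> 0" by auto
  qed
  have cO: "connected \<Omega>" unfolding \<Omega>_def by (intro connected_Times cH) auto
  define Z where "Z = {z \<in> \<Omega>. v z = 0}"
  have Zopen: "open Z"
  proof (rule openI)
    fix z1 assume z1: "z1 \<in> Z"
    obtain \<delta> where \<delta>: "\<delta> > 0" "cball z1 \<delta> \<subseteq> \<Omega>"
      using z1 oO open_contains_cball_eq unfolding Z_def by blast
    have "ball z1 (\<delta>/4) \<subseteq> Z"
    proof
      fix p assume p: "p \<in> ball z1 (\<delta>/4)"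
      have pO: "p \<in> \<Omega>" using p \<delta> by auto
      show "p \<in> Z"
      proof (rule ccontr)
        assume "p \<notin> Z"
        hence vp: "v p > 0" using vnn[OF pO] pO by (auto simp: Z_def)
        have cbO: "cball p (\<delta>/2) \<subseteq> \<Omega>"
        proof
          fix q assume "q \<in> cball p (\<delta>/2)"
          hence "dist p q \<le> \<delta>/2" by simp
          moreover have "dist z1 p < \<delta>/4" using p by simp
          moreover have "dist z1 q \<le> dist z1 p + dist p q" by (rule dist_triangle)
          ultimately have "dist z1 q \<le> \<delta>" using \<delta>(1) by linarith
          thus "q \<in> \<Omega>" using \<delta> by auto
        qed
        define K where "K = {q \<in> cball p (\<delta>/2). v q = 0}"
        have Kc: "compact K"
        proof -
          have "closed K" unfolding K_def
            by (rule continuous_closed_preimage_constant) (use continuous_on_subset[OF contO cbO] in auto)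
          moreover have "K \<subseteq> cball p (\<delta>/2)" by (auto simp: K_def)
          hence "bounded K" using bounded_subset bounded_cball by blast
          ultimately show ?thesis using compact_eq_bounded_closed by blast
        qed
        have z1K: "z1 \<in> K" using z1 p \<delta>(1) by (auto simp: K_def Z_def dist_commute)
        obtain z0 where z0: "z0 \<in> K" "\<And>q. q \<in> K \<Longrightarrow> dist p z0 \<le> dist p q"
          using continuous_attains_inf[OF Kc _ continuous_on_dist[OF continuous_on_const continuous_on_id], of p]
            z1K by blast
        define r where "r = dist p z0"
        have r: "r > 0" using z0(1) vp by (auto simp: r_def K_def)
        have rle: "r < \<delta>/4" using z0(2)[OF z1K] p by (simp add: r_def dist_commute)
        have cbr: "cball p r \<subseteq> cball p (\<delta>/2)" using rle \<delta>(1) by (intro subset_cball) linarith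
        have z0O: "z0 \<in> \<Omega>" using z0(1) cbO by (auto simp: K_def)
        have vz0: "v z0 = 0" using z0(1) by (simp add: K_def)
        define e where "e = (p - z0) /\<^sub>R r"
        have diffz0: "v differentiable (at (z0 + 0 *\<^sub>R e))" using C2 z0O by (simp add: numeral_2_eq_2)
        have dd: "((\<lambda>s. v (z0 + s *\<^sub>R e)) has_real_derivative frechet_derivative v (at (z0 + 0 *\<^sub>R e)) e) (at 0)"
          by (rule dir_deriv[OF diffz0])
        obtain e1 where e1: "e1 > 0" "ball z0 e1 \<subseteq> \<Omega>" using oO z0O open_contains_ball by blast
        have ne: "norm e = 1" using r by (simp add: e_def r_def dist_norm norm_minus_commute)
        have "frechet_derivative v (at (z0 + 0 *\<^sub>R e)) e = 0"
        proof (rule DERIV_local_min[OF dd e1(1)], intro allI impI)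
          fix s :: real assume "\<bar>0 - s\<bar> < e1"
          hence "z0 + s *\<^sub>R e \<in> ball z0 e1" using ne by (simp add: dist_norm)
          hence "z0 + s *\<^sub>R e \<in> \<Omega>" using e1 by blast
          thus "v (z0 + 0 *\<^sub>R e) \<le> v (z0 + s *\<^sub>R e)" using vnn vz0 by simp
        qed
        hence D0: "((\<lambda>s. v (z0 + s *\<^sub>R ((p - z0) /\<^sub>R r))) has_real_derivative 0) (at 0 within {0..})"
          using dd has_field_derivative_at_within unfolding e_def by fastforce
        have "(0::real) > 0"
        proof (rule hopf[OF oO C2 lap r _ _ _ _ _ vz0 D0])
          fix q assume "r/2 < dist p q" "dist p q < r"
          hence "q \<in> cball p r" by simp
          thus "q \<in> \<Omega>" using cbr cbO by blast
        next
          show "continuous_on (cball p r) v" using contO cbr cbO continuous_on_subset by blast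
        next
          fix q assume "q \<in> cball p r" thus "v q \<ge> 0" using vnn cbr cbO by blast
        next
          fix q assume q: "q \<in> ball p r"
          hence "q \<in> cball p r" by simp
          hence qO: "q \<in> \<Omega>" using cbr cbO by blast
          have "v q \<noteq> 0"
          proof
            assume "v q = 0"
            moreover have "q \<in> cball p (\<delta>/2)" using \<open>q \<in> cball p r\<close> cbr by blast
            ultimately have "q \<in> K" by (simp add: K_def)
            thus False using z0(2)[of q] q by (simp add: r_def)
          qed
          thus "v q > 0" using vnn[OF qO] by simp
        next
          show "dist p z0 = r" by (simp add: r_def)
        qed
        thus False by simp
      qed
    qed
    thus "\<exists>e>0. ball z1 e \<subseteq> Z" using \<delta> by (intro exI[of _ "\<delta>/4"]) auto
  qed
  define P where "P = \<Omega> \<inter> v -` {0<..}"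
  have Popen: "open P" unfolding P_def by (rule continuous_open_preimage[OF contO oO]) auto
  have "Z \<inter> \<Omega> = {} \<or> P \<inter> \<Omega> = {}"
  proof (rule connectedD[OF cO Zopen Popen])
    show "Z \<inter> P \<inter> \<Omega> = {}" by (auto simp: Z_def P_def)
    show "\<Omega> \<subseteq> Z \<union> P"
    proof
      fix z assume zO: "z \<in> \<Omega>"
      have "v z \<ge> 0" using vnn[OF zO] .
      thus "z \<in> Z \<union> P" using zO by (cases "v z = 0") (auto simp: Z_def P_def)
    qed
  qed
  thus ?thesis
  proof
    assume "Z \<inter> \<Omega> = {}"
    hence vpos: "\<And>z. z \<in> \<Omega> \<Longrightarrow> v z > 0" using vnn by (force simp: Z_def)
    have "u x0 > 0" if x0: "x0 \<in> H" for x0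
    proof (rule ccontr)
      assume "\<not> u x0 > 0"
      hence u0: "u x0 = 0" using unn x0 by force
      obtain d where d: "is_D H \<phi> u v x0 d" "d + c x0 * u x0 \<ge> 0" using hD x0 by blast
      have dge: "d \<ge> 0" using d(2) u0 by simp
      obtain r where r: "r > 0" "cball x0 r \<subseteq> H" using oH x0 open_contains_cball by blast
      define y where "y = (x0, r)"
      have ballO: "q \<in> \<Omega>" if "dist y q < r" for q
      proof -
        have "dist x0 (fst q) < r" "dist r (snd q) < r"
          using that dist_fst_le[of y q] dist_snd_le[of y q] by (auto simp: y_def)
        thus ?thesis using r by (cases q) (auto simp: \<Omega>_def dist_real_def)
      qed
      have cballcl: "cball y r \<subseteq> closure \<Omega>"
      proof
        fix q assume "q \<in> cball y r"
        hence "dist x0 (fst q) \<le> r" "dist r (snd q) \<le> r"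
          using dist_fst_le[of y q] dist_snd_le[of y q] by (auto simp: y_def)
        hence "fst q \<in> H" "snd q \<ge> 0" using r by (auto simp: dist_real_def)
        thus "q \<in> closure \<Omega>" unfolding clO using closure_subset by (cases q) auto
      qed
      have Dv: "((\<lambda>s. v ((x0, 0) + s *\<^sub>R ((y - (x0, 0)) /\<^sub>R r))) has_real_derivative - d) (at 0 within {0..})"
      proof -
        have "(\<lambda>s. v ((x0, 0) + s *\<^sub>R ((y - (x0, 0)) /\<^sub>R r))) = (\<lambda>t. v (x0, t))"
          using r by (simp add: y_def)
        thus ?thesis using d(1) by (simp add: is_D_def)
      qed
      have "- d > 0"
      proof (rule hopf[OF oO C2 lap r(1) _ _ _ _ _ _ Dv])
        fix q assume "r/2 < dist y q" "dist y q < r" thus "q \<in> \<Omega>" using ballO by blast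
      next
        show "continuous_on (cball y r) v" using continuous_on_subset[OF cont cballcl] .
      next
        fix q assume "q \<in> cball y r" thus "v q \<ge> 0" using vnn_cl cballcl by blast
      next
        fix q assume "q \<in> ball y r" thus "v q > 0" using vpos ballO by simp
      next
        show "dist y (x0, 0) = r" using r by (simp add: y_def dist_Pair_Pair)
      next
        show "v (x0, 0) = 0" using bot x0 u0 by simp
      qed
      thus False using dge by simp
    qed
    thus ?thesis by blast
  next
    assume "P \<inter> \<Omega> = {}"
    hence vz: "\<And>z. z \<in> \<Omega> \<Longrightarrow> v z = 0" using vnn by (force simp: P_def)
    have "v ` closure \<Omega> \<subseteq> {0}"
      by (rule image_closure_subset[OF cont]) (use vz in auto)
    moreover have "(x, 0) \<in> closure \<Omega>" if "x \<in> H" for x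
      using that closure_subset unfolding clO by auto
    ultimately have "u x = 0" if "x \<in> H" for x using that bot by force
    thus ?thesis by blast
  qed
qed

end
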